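(* Let $\Gamma=(V,E)$ be a finite graph, $\{G_v\}_{v\in V}$ a collection of non-trivial finitely generated abelian groups, and $G=W(\Gamma,\{G_v\}_{v\in V})$ their graph product. Assume that every vertex $v$ with $st(v)=V$ has finite vertex group $G_v$. Then $[\mathrm{Aut}(G),G]$ is a subgroup of finite index in $G$. Moreover, if no vertex $v\in V$ satisfies $st(v)=V$ and every vertex group $G_v$ is finite of odd order (i.e. no element of any vertex group has infinite order or order a power of $2$ other than $1$), then $[\mathrm{Aut}(G),G]=G$.
   Context: Graph: $\Gamma=(V,E)$, $V$ non-empty finite, $E$ a set of 2-element subsets; $lk(v)=\{x:\{v,x\}\in E\}$, $st(v)=lk(v)\cup\{v\}$. Graph product: $(\ast_{v}G_v)/N$ with $N$ normally generated by $[G_x,G_y]$, $\{x,y\}\in E$. $[\mathrm{Aut}(G),G]$ denotes the subgroup of $G$ generated by all elements $\varphi(g)g^{-1}$ with $\varphi\in\mathrm{Aut}(G)$, $g\in G$ (this corresponds to the commutators $[\varphi,c_g]=c_{\varphi(g)g^{-1}}$ in $\mathrm{Aut}(G)$, where $c_g$ is conjugation by $g$). *)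

theory Defs
  imports "HOL-Algebra.Algebra"
begin

definition simple_graph :: "'v set \<Rightarrow> 'v set set \<Rightarrow> bool" where
  "simple_graph V E \<longleftrightarrow> finite V \<and> V \<noteq> {} \<and>
     (\<forall>e\<in>E. \<exists>x y. e = {x, y} \<and> x \<noteq> y \<and> x \<in> V \<and> y \<in> V)"

definition lk :: "'v set set \<Rightarrow> 'v \<Rightarrow> 'v set" where
  "lk E v = {x. {v, x} \<in> E}"

definition st :: "'v set set \<Rightarrow> 'v \<Rightarrow> 'v set" where
  "st E v = lk E v \<union> {v}"

definition gp_words :: "'v set \<Rightarrow> ('v \<Rightarrow> 'g monoid) \<Rightarrow> ('v \<times> 'g) list set" where
  "gp_words V G = {w. \<forall>(v, g) \<in> set w. v \<in> V \<and> g \<in> carrier (G v)}"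

text \<open>Elementary moves: delete an identity letter (free product), merge two adjacent
  letters of the same vertex group (free product), swap adjacent letters from adjacent
  vertices (the relations [G_x, G_y] = 1 for {x,y} in E).\<close>

inductive_set gp_step :: "'v set \<Rightarrow> 'v set set \<Rightarrow> ('v \<Rightarrow> 'g monoid)
    \<Rightarrow> (('v \<times> 'g) list \<times> ('v \<times> 'g) list) set"
  for V E G where
  del_one: "\<lbrakk>xs \<in> gp_words V G; ys \<in> gp_words V G; v \<in> V\<rbrakk> \<Longrightarrow>
     (xs @ [(v, \<one>\<^bsub>G v\<^esub>)] @ ys, xs @ ys) \<in> gp_step V E G"
| merge: "\<lbrakk>xs \<in> gp_words V G; ys \<in> gp_words V G; v \<in> V;
     a \<in> carrier (G v); b \<in> carrier (G v)\<rbrakk> \<Longrightarrow>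
     (xs @ [(v, a), (v, b)] @ ys, xs @ [(v, a \<otimes>\<^bsub>G v\<^esub> b)] @ ys) \<in> gp_step V E G"
| swap: "\<lbrakk>xs \<in> gp_words V G; ys \<in> gp_words V G; {u, w} \<in> E; u \<in> V; w \<in> V;
     a \<in> carrier (G u); b \<in> carrier (G w)\<rbrakk> \<Longrightarrow>
     (xs @ [(u, a), (w, b)] @ ys, xs @ [(w, b), (u, a)] @ ys) \<in> gp_step V E G"

definition gp_eqv :: "'v set \<Rightarrow> 'v set set \<Rightarrow> ('v \<Rightarrow> 'g monoid)
    \<Rightarrow> (('v \<times> 'g) list \<times> ('v \<times> 'g) list) set" where
  "gp_eqv V E G = (gp_step V E G \<union> (gp_step V E G)\<inverse>)\<^sup>* \<inter> (gp_words V G \<times> gp_words V G)"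

definition graph_product :: "'v set \<Rightarrow> 'v set set \<Rightarrow> ('v \<Rightarrow> 'g monoid)
    \<Rightarrow> ('v \<times> 'g) list set monoid" where
  "graph_product V E G =
     \<lparr> carrier = (gp_words V G // gp_eqv V E G),
       monoid.mult = (\<lambda>A B. ( gp_eqv V E G `` {(SOME a. a \<in> A) @ (SOME b. b \<in> B)})),
       one = (gp_eqv V E G `` {[]}) \<rparr>"

definition aut_comm :: "('a, 'b) monoid_scheme \<Rightarrow> 'a set" where
  "aut_comm H = generate H
     {\<phi> g \<otimes>\<^bsub>H\<^esub> inv\<^bsub>H\<^esub> g | \<phi> g. \<phi> \<in> iso H H \<and> g \<in> carrier H}"

definition fin_gen_group :: "('a, 'b) monoid_scheme \<Rightarrow> bool" where
  "fin_gen_group H \<longleftrightarrow> (\<exists>S. finite S \<and> S \<subseteq> carrier H \<and> generate H S = carrier H)"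

end

theory Submission
  imports Defs
begin


definition lmap :: "('v \<Rightarrow> 'g \<Rightarrow> 'g) \<Rightarrow> ('v \<times> 'g) list \<Rightarrow> ('v \<times> 'g) list" where
  "lmap f w = map (\<lambda>(u,g). (u, f u g)) w"

locale gp =
  fixes V :: "'v set" and E :: "'v set set" and G :: "'v \<Rightarrow> 'g monoid"
  assumes ab: "\<And>v. v \<in> V \<Longrightarrow> comm_group (G v)"
begin

abbreviation "W \<equiv> gp_words V G"
abbreviation "R \<equiv> gp_eqv V E G"
abbreviation "S \<equiv> gp_step V E G \<union> (gp_step V E G)\<inverse>"
abbreviation "GP \<equiv> graph_product V E G"
abbreviation cls where "cls w \<equiv> R `` {w}"

lemma grp: "v \<in> V \<Longrightarrow> group (G v)"
  using ab comm_group.axioms(2) by blast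

lemma words_append[simp]: "xs @ ys \<in> W \<longleftrightarrow> xs \<in> W \<and> ys \<in> W"
  by (auto simp: gp_words_def)
lemma words_Cons[simp]: "x # ys \<in> W \<longleftrightarrow> fst x \<in> V \<and> snd x \<in> carrier (G (fst x)) \<and> ys \<in> W"
  by (auto simp: gp_words_def)
lemma words_Nil[simp]: "[] \<in> W"
  by (auto simp: gp_words_def)

lemma step_right: "(x,y) \<in> gp_step V E G \<Longrightarrow> z \<in> W \<Longrightarrow> (x@z, y@z) \<in> gp_step V E G"
proof (induction rule: gp_step.induct)
  case (del_one xs ys v)
  then show ?case using gp_step.del_one[of xs V G "ys@z" v E] by simp
next
  case (merge xs ys v a b)
  then show ?case using gp_step.merge[of xs V G "ys@z" v a b E] by simp
next
  case (swap xs ys u w a b)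
  then show ?case using gp_step.swap[of xs V G "ys@z" u w E a b] by simp
qed

lemma step_left: "(x,y) \<in> gp_step V E G \<Longrightarrow> z \<in> W \<Longrightarrow> (z@x, z@y) \<in> gp_step V E G"
proof (induction rule: gp_step.induct)
  case (del_one xs ys v)
  then show ?case using gp_step.del_one[of "z@xs" V G "ys" v E] by simp
next
  case (merge xs ys v a b)
  then show ?case using gp_step.merge[of "z@xs" V G "ys" v a b E] by simp
next
  case (swap xs ys u w a b)
  then show ?case using gp_step.swap[of "z@xs" V G "ys" u w E a b] by simp
qed

lemma S_right: "(x,y) \<in> S\<^sup>* \<Longrightarrow> z \<in> W \<Longrightarrow> (x@z, y@z) \<in> S\<^sup>*"
proof (induction rule: rtrancl_induct)
  case base then show ?case by simp
next
  case (step y w)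
  then have "(y@z, w@z) \<in> S" using step_right by blast
  then show ?case using step by (meson rtrancl.rtrancl_into_rtrancl)
qed

lemma S_left: "(x,y) \<in> S\<^sup>* \<Longrightarrow> z \<in> W \<Longrightarrow> (z@x, z@y) \<in> S\<^sup>*"
proof (induction rule: rtrancl_induct)
  case base then show ?case by simp
next
  case (step y w)
  then have "(z@y, z@w) \<in> S" using step_left by blast
  then show ?case using step by (meson rtrancl.rtrancl_into_rtrancl)
qed

lemma R_iff: "(x,y) \<in> R \<longleftrightarrow> (x,y) \<in> S\<^sup>* \<and> x \<in> W \<and> y \<in> W"
  by (auto simp: gp_eqv_def)

lemma R_equiv: "equiv W R"
proof (rule equivI)
  show "R \<subseteq> W \<times> W" by (auto simp: R_iff)
  show "refl_on W R" unfolding refl_on_def by (auto simp: R_iff)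
  show "sym R" unfolding sym_def R_iff
    by (metis converse_Un converse_converse converse_iff rtrancl_converseI sup_commute)
  show "trans R" unfolding trans_def R_iff by (meson rtrancl_trans)
qed

lemma R_append: "(x,x') \<in> R \<Longrightarrow> (y,y') \<in> R \<Longrightarrow> (x@y, x'@y') \<in> R"
  unfolding R_iff by (meson S_left S_right rtrancl_trans words_append)

lemma step_R: "(x,y) \<in> gp_step V E G \<Longrightarrow> x \<in> W \<Longrightarrow> y \<in> W \<Longrightarrow> (x,y) \<in> R"
  unfolding R_iff by blast

lemma cls_eq: "(x,y) \<in> R \<Longrightarrow> cls x = cls y"
  using R_equiv equiv_class_eq by metis

lemma cls_eq_iff: "x \<in> W \<Longrightarrow> y \<in> W \<Longrightarrow> cls x = cls y \<longleftrightarrow> (x,y) \<in> R"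
  using R_equiv eq_equiv_class_iff by metis

lemma in_cls: "x \<in> W \<Longrightarrow> x \<in> cls x"
  using R_equiv equiv_class_self by metis

lemma carrier_GP: "carrier GP = W // R"
  by (simp add: graph_product_def)

lemma cls_in: "x \<in> W \<Longrightarrow> cls x \<in> carrier GP"
  by (simp add: carrier_GP quotientI)

lemma one_GP: "\<one>\<^bsub>GP\<^esub> = cls []"
  by (simp add: graph_product_def)

lemma some_cls: "x \<in> W \<Longrightarrow> (x, SOME a. a \<in> cls x) \<in> R"
proof -
  assume x: "x \<in> W"
  have "(SOME a. a \<in> cls x) \<in> cls x" using in_cls[OF x] by (rule someI)
  then show ?thesis by simp
qed

lemma mult_cls: "x \<in> W \<Longrightarrow> y \<in> W \<Longrightarrow> cls x \<otimes>\<^bsub>GP\<^esub> cls y = cls (x @ y)"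
proof -
  assume x: "x \<in> W" and y: "y \<in> W"
  have "((SOME a. a \<in> cls x) @ (SOME b. b \<in> cls y), x @ y) \<in> R"
    using R_append some_cls[OF x] some_cls[OF y] R_equiv by (meson equivE symD)
  then show ?thesis by (simp add: graph_product_def cls_eq)
qed

lemma carrier_GPE: "A \<in> carrier GP \<Longrightarrow> (\<And>x. x \<in> W \<Longrightarrow> A = cls x \<Longrightarrow> P) \<Longrightarrow> P"
  unfolding carrier_GP by (erule quotientE) blast

definition winv :: "('v \<times> 'g) list \<Rightarrow> ('v \<times> 'g) list" where
  "winv w = rev (lmap (\<lambda>u g. inv\<^bsub>G u\<^esub> g) w)"

lemma winv_Cons: "winv (a # w) = winv w @ [(fst a, inv\<^bsub>G (fst a)\<^esub> snd a)]"
  by (cases a) (simp add: winv_def lmap_def)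

lemma winv_W: "w \<in> W \<Longrightarrow> winv w \<in> W"
  by (induction w) (auto simp: winv_Cons winv_def lmap_def group.inv_closed[OF grp])

lemma winv_R: "w \<in> W \<Longrightarrow> (winv w @ w, []) \<in> R"
proof (induction w)
  case Nil then show ?case by (simp add: winv_def lmap_def R_iff)
next
  case (Cons a w)
  obtain v g where a: "a = (v,g)" by force
  have v: "v \<in> V" and g: "g \<in> carrier (G v)" and w: "w \<in> W" using Cons a by auto
  interpret Gv: group "G v" using grp v .
  have wi: "winv w \<in> W" using winv_W w .
  have "(winv w @ [(v, inv\<^bsub>G v\<^esub> g), (v, g)] @ w, winv w @ [(v, inv\<^bsub>G v\<^esub> g \<otimes>\<^bsub>G v\<^esub> g)] @ w) \<in> R"
    apply (rule step_R)
    using gp_step.merge[of "winv w" V G w v "inv\<^bsub>G v\<^esub> g" g E] v g w wi apply simp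
    using v g w wi by auto
  moreover have "(winv w @ [(v, \<one>\<^bsub>G v\<^esub>)] @ w, winv w @ w) \<in> R"
    apply (rule step_R)
    using gp_step.del_one[of "winv w" V G w v E] v g w wi apply simp
    using v g w wi by auto
  ultimately have "(winv (a#w) @ a # w, winv w @ w) \<in> R"
    using g R_equiv by (simp add: a winv_Cons) (meson equivE transD)
  then show ?case using Cons R_equiv w by (meson equivE transD)
qed

lemma GP_group: "group GP"
proof (rule groupI)
  fix A B assume "A \<in> carrier GP" "B \<in> carrier GP"
  then show "A \<otimes>\<^bsub>GP\<^esub> B \<in> carrier GP"
    by (elim carrier_GPE) (simp add: mult_cls cls_in)
next
  show "\<one>\<^bsub>GP\<^esub> \<in> carrier GP" by (simp add: one_GP cls_in)
next
  fix A B C assume "A \<in> carrier GP" "B \<in> carrier GP" "C \<in> carrier GP"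
  then show "A \<otimes>\<^bsub>GP\<^esub> B \<otimes>\<^bsub>GP\<^esub> C = A \<otimes>\<^bsub>GP\<^esub> (B \<otimes>\<^bsub>GP\<^esub> C)"
    by (elim carrier_GPE) (simp add: mult_cls)
next
  fix A assume "A \<in> carrier GP"
  then show "\<one>\<^bsub>GP\<^esub> \<otimes>\<^bsub>GP\<^esub> A = A"
    by (elim carrier_GPE) (simp add: mult_cls one_GP)
next
  fix A assume "A \<in> carrier GP"
  then show "\<exists>B\<in>carrier GP. B \<otimes>\<^bsub>GP\<^esub> A = \<one>\<^bsub>GP\<^esub>"
    apply (elim carrier_GPE)
    subgoal for x
      apply (rule bexI[of _ "cls (winv x)"])
       apply (simp add: mult_cls winv_W one_GP cls_eq winv_R)
      apply (simp add: cls_in winv_W)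
      done
    done
qed

end



context gp begin

lemma hom_one': "v \<in> V \<Longrightarrow> h \<in> hom (G v) (G v) \<Longrightarrow> h \<one>\<^bsub>G v\<^esub> = \<one>\<^bsub>G v\<^esub>"
  using grp group_hom.hom_one group_hom.intro group_hom_axioms_def by metis

lemma lmap_append[simp]: "lmap f (x @ y) = lmap f x @ lmap f y"
  by (simp add: lmap_def)
lemma lmap_Cons[simp]: "lmap f ((u,g) # y) = (u, f u g) # lmap f y"
  by (simp add: lmap_def)
lemma lmap_Nil[simp]: "lmap f [] = []"
  by (simp add: lmap_def)

lemma lmap_W: assumes hf: "\<And>u. u \<in> V \<Longrightarrow> f u \<in> hom (G u) (G u)"
  shows "x \<in> W \<Longrightarrow> lmap f x \<in> W"
  by (induction x) (auto simp: hom_in_carrier[OF hf])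

lemma lmap_step: assumes hf: "\<And>u. u \<in> V \<Longrightarrow> f u \<in> hom (G u) (G u)"
  shows "(x,y) \<in> gp_step V E G \<Longrightarrow> (lmap f x, lmap f y) \<in> gp_step V E G"
proof (induction rule: gp_step.induct)
  case (del_one xs ys v)
  then show ?case using gp_step.del_one[of "lmap f xs" V G "lmap f ys" v E] lmap_W[OF hf]
    by (simp add: hom_one'[OF _ hf])
next
  case (merge xs ys v a b)
  then show ?case using gp_step.merge[of "lmap f xs" V G "lmap f ys" v "f v a" "f v b" E] lmap_W[OF hf]
    by (simp add: hom_mult[OF hf] hom_in_carrier[OF hf])
next
  case (swap xs ys u w a b)
  then show ?case using gp_step.swap[of "lmap f xs" V G "lmap f ys" u w E "f u a" "f w b"] lmap_W[OF hf]
    by (simp add: hom_in_carrier[OF hf])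
qed

lemma lmap_R: assumes hf: "\<And>u. u \<in> V \<Longrightarrow> f u \<in> hom (G u) (G u)"
  shows "(x,y) \<in> R \<Longrightarrow> (lmap f x, lmap f y) \<in> R"
proof -
  assume xy: "(x,y) \<in> R"
  have "(x,y) \<in> S\<^sup>* \<Longrightarrow> (lmap f x, lmap f y) \<in> S\<^sup>*"
  proof (induction rule: rtrancl_induct)
    case base then show ?case by simp
  next
    case (step y w)
    then have "(lmap f y, lmap f w) \<in> S" using lmap_step[OF hf] by blast
    then show ?case using step by (meson rtrancl.rtrancl_into_rtrancl)
  qed
  then show ?thesis using xy lmap_W[OF hf] by (auto simp: R_iff)
qed

definition Phi :: "('v \<Rightarrow> 'g \<Rightarrow> 'g) \<Rightarrow> ('v \<times> 'g) list set \<Rightarrow> ('v \<times> 'g) list set" where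
  "Phi f A = cls (lmap f (SOME a. a \<in> A))"

lemma Phi_cls: assumes hf: "\<And>u. u \<in> V \<Longrightarrow> f u \<in> hom (G u) (G u)"
  shows "x \<in> W \<Longrightarrow> Phi f (cls x) = cls (lmap f x)"
  unfolding Phi_def using some_cls lmap_R[OF hf] R_equiv
  by (metis cls_eq equivE symD)

lemma Phi_hom: assumes hf: "\<And>u. u \<in> V \<Longrightarrow> f u \<in> hom (G u) (G u)"
  shows "Phi f \<in> hom GP GP"
proof (rule homI)
  fix A assume "A \<in> carrier GP"
  then show "Phi f A \<in> carrier GP"
    by (elim carrier_GPE) (simp add: Phi_cls[OF hf] cls_in lmap_W[OF hf])
next
  fix A B assume "A \<in> carrier GP" "B \<in> carrier GP"
  then show "Phi f (A \<otimes>\<^bsub>GP\<^esub> B) = Phi f A \<otimes>\<^bsub>GP\<^esub> Phi f B"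
    by (elim carrier_GPE) (simp add: Phi_cls[OF hf] mult_cls lmap_W[OF hf])
qed

lemma lmap_lmap: assumes "\<And>u a. u \<in> V \<Longrightarrow> a \<in> carrier (G u) \<Longrightarrow> f u (f u a) = a"
  shows "x \<in> W \<Longrightarrow> lmap f (lmap f x) = x"
  by (induction x) (auto simp: assms)

lemma Phi_iso: assumes hf: "\<And>u. u \<in> V \<Longrightarrow> f u \<in> hom (G u) (G u)"
  and inv: "\<And>u a. u \<in> V \<Longrightarrow> a \<in> carrier (G u) \<Longrightarrow> f u (f u a) = a"
  shows "Phi f \<in> iso GP GP"
proof (rule isoI)
  show "Phi f \<in> hom GP GP" using Phi_hom[OF hf] .
  have PP: "Phi f (Phi f A) = A" if "A \<in> carrier GP" for A
    using that by (elim carrier_GPE) (simp add: Phi_cls[OF hf] lmap_W[OF hf] lmap_lmap[OF inv])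
  show "bij_betw (Phi f) (carrier GP) (carrier GP)"
    apply (rule bij_betw_byWitness[where f' = "Phi f"])
    using PP hom_in_carrier[OF Phi_hom[OF hf]] by auto
qed

definition finv :: "'v \<Rightarrow> 'v \<Rightarrow> 'g \<Rightarrow> 'g" where
  "finv v u a = (if u = v then inv\<^bsub>G u\<^esub> a else a)"

lemma finv_hom: "u \<in> V \<Longrightarrow> finv v u \<in> hom (G u) (G u)"
  unfolding finv_def
  using ab[of u] by (auto intro!: homI simp: comm_group.inv_mult comm_group_def group.inv_closed)

lemma finv_inv: "u \<in> V \<Longrightarrow> a \<in> carrier (G u) \<Longrightarrow> finv v u (finv v u a) = a"
  unfolding finv_def using grp[of u] by (auto simp: group.inv_inv)

lemma finv_iso: "Phi (finv v) \<in> iso GP GP"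
  by (rule Phi_iso[OF finv_hom finv_inv])

lemma single_mult: assumes v: "v \<in> V" and a: "a \<in> carrier (G v)" and b: "b \<in> carrier (G v)"
  shows "cls [(v,a)] \<otimes>\<^bsub>GP\<^esub> cls [(v,b)] = cls [(v, a \<otimes>\<^bsub>G v\<^esub> b)]"
proof -
  interpret Gv: group "G v" using grp v .
  show ?thesis
  apply (simp add: mult_cls v a b)
  apply (rule cls_eq, rule step_R)
  using gp_step.merge[of "[]" V G "[]" v a b E] v a b by auto
qed

lemma single_one: assumes v: "v \<in> V" shows "cls [(v, \<one>\<^bsub>G v\<^esub>)] = \<one>\<^bsub>GP\<^esub>"
proof -
  interpret Gv: group "G v" using grp v .
  show ?thesis
  apply (simp add: one_GP)
  apply (rule cls_eq, rule step_R)
  using gp_step.del_one[of "[]" V G "[]" v E] v by auto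
qed

definition iota :: "'v \<Rightarrow> 'g \<Rightarrow> ('v \<times> 'g) list set" where
  "iota v g = cls [(v,g)]"

lemma iota_hom: "v \<in> V \<Longrightarrow> iota v \<in> hom (G v) GP"
  by (auto intro!: homI simp: iota_def cls_in single_mult)

lemma single_inv: "v \<in> V \<Longrightarrow> a \<in> carrier (G v) \<Longrightarrow> inv\<^bsub>GP\<^esub> (cls [(v,a)]) = cls [(v, inv\<^bsub>G v\<^esub> a)]"
proof -
  assume v: "v \<in> V" and a: "a \<in> carrier (G v)"
  interpret Gv: group "G v" using grp v .
  show ?thesis
  apply (rule group.inv_equality[OF GP_group])
  using v a by (simp_all add: single_mult single_one cls_in)
qed

lemma gen_in: "\<phi> \<in> iso GP GP \<Longrightarrow> g \<in> carrier GP \<Longrightarrow> \<phi> g \<otimes>\<^bsub>GP\<^esub> inv\<^bsub>GP\<^esub> g \<in> aut_comm GP"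
  unfolding aut_comm_def by (rule generate.incl) blast

lemma square_in_aut_comm: assumes v: "v \<in> V" and h: "h \<in> carrier (G v)"
  shows "cls [(v, h \<otimes>\<^bsub>G v\<^esub> h)] \<in> aut_comm GP"
proof -
  interpret Gv: group "G v" using grp v .
  have "Phi (finv v) (cls [(v, inv\<^bsub>G v\<^esub> h)]) \<otimes>\<^bsub>GP\<^esub> inv\<^bsub>GP\<^esub> (cls [(v, inv\<^bsub>G v\<^esub> h)]) \<in> aut_comm GP"
    by (rule gen_in[OF finv_iso cls_in]) (simp add: v h)
  also have "Phi (finv v) (cls [(v, inv\<^bsub>G v\<^esub> h)]) = cls [(v,h)]"
    using v h by (simp add: Phi_cls[OF finv_hom] finv_def)
  also have "inv\<^bsub>GP\<^esub> (cls [(v, inv\<^bsub>G v\<^esub> h)]) = cls [(v,h)]"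
    using v h by (simp add: single_inv)
  finally show ?thesis using v h by (simp add: single_mult)
qed

end

lemma (in group) inner_iso: assumes x: "x \<in> carrier G" shows "(\<lambda>y. x \<otimes> y \<otimes> inv x) \<in> iso G G"
proof (rule isoI)
  have c1: "inv x \<otimes> (x \<otimes> z) = z" if "z \<in> carrier G" for z
    using that x by (simp add: m_assoc[symmetric])
  have c2: "x \<otimes> (inv x \<otimes> z) = z" if "z \<in> carrier G" for z
    using that x by (simp add: m_assoc[symmetric])
  show "(\<lambda>y. x \<otimes> y \<otimes> inv x) \<in> hom G G"
    by (rule homI) (simp_all add: x m_assoc c1)
  show "bij_betw (\<lambda>y. x \<otimes> y \<otimes> inv x) (carrier G) (carrier G)"
    apply (rule bij_betw_byWitness[where f' = "\<lambda>y. inv x \<otimes> y \<otimes> x"])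
    using x by (auto simp: m_assoc c1 c2)
qed




lemma (in normal) comm_quot:
  assumes "\<And>a b. a \<in> carrier G \<Longrightarrow> b \<in> carrier G \<Longrightarrow> a \<otimes> b \<otimes> inv a \<otimes> inv b \<in> H"
  shows "comm_group (G Mod H)"
proof (rule group.group_comm_groupI[OF factorgroup_is_group])
  fix Xa Ya assume "Xa \<in> carrier (G Mod H)" "Ya \<in> carrier (G Mod H)"
  then obtain a b where a: "a \<in> carrier G" "Xa = H #> a" and b: "b \<in> carrier G" "Ya = H #> b"
    unfolding FactGroup_def RCOSETS_def by auto
  have "a \<otimes> b \<otimes> inv (b \<otimes> a) = a \<otimes> b \<otimes> inv a \<otimes> inv b"
    using a b by (simp add: inv_mult_group m_assoc)
  then have "a \<otimes> b \<in> H #> (b \<otimes> a)"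
    using rcos_module[OF is_group, of "b \<otimes> a" "a \<otimes> b"] assms a b by simp
  then have "H #> (b \<otimes> a) = H #> (a \<otimes> b)"
    using repr_independence[OF _ _ subgroup_axioms] a b by simp
  then show "Xa \<otimes>\<^bsub>G Mod H\<^esub> Ya = Ya \<otimes>\<^bsub>G Mod H\<^esub> Xa"
    using a b by (simp add: FactGroup_def rcos_sum)
qed

lemma (in comm_group) prod_sym_diff:
  assumes T: "finite T" "T \<subseteq> carrier G" and inv2: "\<And>t. t \<in> T \<Longrightarrow> t \<otimes> t = \<one>"
    and U1: "U1 \<subseteq> T" and U2: "U2 \<subseteq> T"
  shows "finprod G (\<lambda>x. x) U1 \<otimes> finprod G (\<lambda>x. x) U2 = finprod G (\<lambda>x. x) ((U1 - U2) \<union> (U2 - U1))"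
proof -
  let ?A = "U1 - U2" and ?B = "U2 - U1" and ?I = "U1 \<inter> U2"
  have fin: "finite ?A" "finite ?B" "finite ?I" using T U1 U2 finite_subset by blast+
  have Pi: "(\<lambda>x. x) \<in> Xa \<rightarrow> carrier G" if "Xa \<subseteq> T" for Xa using that T by auto
  have e1: "U1 = ?A \<union> ?I" by blast
  have p1: "finprod G (\<lambda>x. x) U1 = finprod G (\<lambda>x. x) ?A \<otimes> finprod G (\<lambda>x. x) ?I"
  proof -
    have "finprod G (\<lambda>x. x) U1 = finprod G (\<lambda>x. x) (?A \<union> ?I)" by (rule arg_cong[OF e1])
    also have "\<dots> = finprod G (\<lambda>x. x) ?A \<otimes> finprod G (\<lambda>x. x) ?I"
      by (rule finprod_Un_disjoint) (use fin Pi U1 U2 in auto)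
    finally show ?thesis .
  qed
  have e2: "U2 = ?B \<union> ?I" by blast
  have p2: "finprod G (\<lambda>x. x) U2 = finprod G (\<lambda>x. x) ?B \<otimes> finprod G (\<lambda>x. x) ?I"
  proof -
    have "finprod G (\<lambda>x. x) U2 = finprod G (\<lambda>x. x) (?B \<union> ?I)" by (rule arg_cong[OF e2])
    also have "\<dots> = finprod G (\<lambda>x. x) ?B \<otimes> finprod G (\<lambda>x. x) ?I"
      by (rule finprod_Un_disjoint) (use fin Pi U1 U2 in auto)
    finally show ?thesis .
  qed
  have "finprod G (\<lambda>x. x) ?I \<otimes> finprod G (\<lambda>x. x) ?I = finprod G (\<lambda>x. x \<otimes> x) ?I"
    by (rule finprod_multf[symmetric]) (use Pi[of ?I] U1 in auto)
  also have "\<dots> = finprod G (\<lambda>_. \<one>) ?I"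
    by (rule finprod_cong') (use inv2 U1 in auto)
  finally have sq: "finprod G (\<lambda>x. x) ?I \<otimes> finprod G (\<lambda>x. x) ?I = \<one>" by simp
  have c: "finprod G (\<lambda>x. x) ?A \<in> carrier G" "finprod G (\<lambda>x. x) ?B \<in> carrier G" "finprod G (\<lambda>x. x) ?I \<in> carrier G"
    using Pi U1 U2 by (auto intro!: finprod_closed)
  have "finprod G (\<lambda>x. x) U1 \<otimes> finprod G (\<lambda>x. x) U2 = finprod G (\<lambda>x. x) ?A \<otimes> finprod G (\<lambda>x. x) ?B \<otimes> (finprod G (\<lambda>x. x) ?I \<otimes> finprod G (\<lambda>x. x) ?I)"
    unfolding p1 p2 using c by (simp add: m_ac)
  also have "\<dots> = finprod G (\<lambda>x. x) ?A \<otimes> finprod G (\<lambda>x. x) ?B" using sq c by simp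
  also have "\<dots> = finprod G (\<lambda>x. x) (?A \<union> ?B)"
    by (rule finprod_Un_disjoint[symmetric]) (use fin Pi U1 U2 in auto)
  finally show ?thesis .
qed

lemma (in comm_group) finite_gen_invol:
  assumes T: "finite T" "T \<subseteq> carrier G" and inv2: "\<And>t. t \<in> T \<Longrightarrow> t \<otimes> t = \<one>"
  shows "finite (generate G T)"
proof -
  have "generate G T \<subseteq> (\<lambda>U. finprod G (\<lambda>x. x) U) ` Pow T"
  proof
    fix x assume "x \<in> generate G T"
    then show "x \<in> (\<lambda>U. finprod G (\<lambda>x. x) U) ` Pow T"
    proof (induction rule: generate.induct)
      case one
      then show ?case by (rule image_eqI[of _ _ "{}"]) auto
    next
      case (incl h)
      then show ?case using T by (intro image_eqI[of _ _ "{h}"]) auto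
    next
      case (inv h)
      then have "inv h = h" using T inv2 by (intro inv_equality) auto
      then show ?case using inv T by (intro image_eqI[of _ _ "{h}"]) auto
    next
      case (eng h1 h2)
      then obtain U1 U2 where "U1 \<subseteq> T" "U2 \<subseteq> T" "h1 = finprod G (\<lambda>x. x) U1" "h2 = finprod G (\<lambda>x. x) U2" by blast
      then show ?case using prod_sym_diff[OF T inv2] by (intro image_eqI[of _ _ "(U1 - U2) \<union> (U2 - U1)"]) auto
    qed
  qed
  then show ?thesis using T finite_subset by blast
qed




context gp begin

abbreviation "AC \<equiv> aut_comm GP"

lemma aut_set_sub: "{\<phi> g \<otimes>\<^bsub>GP\<^esub> inv\<^bsub>GP\<^esub> g | \<phi> g. \<phi> \<in> iso GP GP \<and> g \<in> carrier GP} \<subseteq> carrier GP"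
proof -
  interpret GPg: group GP by (rule GP_group)
  show ?thesis by (auto simp: iso_def hom_in_carrier)
qed

lemma AC_subgroup: "subgroup AC GP"
  unfolding aut_comm_def by (rule group.generate_is_subgroup[OF GP_group aut_set_sub])

lemma comm_in: "x \<in> carrier GP \<Longrightarrow> y \<in> carrier GP \<Longrightarrow>
   x \<otimes>\<^bsub>GP\<^esub> y \<otimes>\<^bsub>GP\<^esub> inv\<^bsub>GP\<^esub> x \<otimes>\<^bsub>GP\<^esub> inv\<^bsub>GP\<^esub> y \<in> AC"
  using gen_in[OF group.inner_iso[OF GP_group]] by simp

lemma AC_normal: "AC \<lhd> GP"
proof (rule group.normal_invI[OF GP_group AC_subgroup])
  interpret GPg: group GP by (rule GP_group)
  interpret H: subgroup AC GP by (rule AC_subgroup)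
  fix x h assume x: "x \<in> carrier GP" and h: "h \<in> AC"
  have hc: "h \<in> carrier GP" using h H.subset by blast
  have "x \<otimes>\<^bsub>GP\<^esub> h \<otimes>\<^bsub>GP\<^esub> inv\<^bsub>GP\<^esub> x =
      (x \<otimes>\<^bsub>GP\<^esub> h \<otimes>\<^bsub>GP\<^esub> inv\<^bsub>GP\<^esub> x \<otimes>\<^bsub>GP\<^esub> inv\<^bsub>GP\<^esub> h) \<otimes>\<^bsub>GP\<^esub> h"
    using x hc by (simp add: GPg.m_assoc)
  then show "x \<otimes>\<^bsub>GP\<^esub> h \<otimes>\<^bsub>GP\<^esub> inv\<^bsub>GP\<^esub> x \<in> AC"
    using H.m_closed[OF comm_in[OF x hc] h] by simp
qed

lemma iota_group_hom: "v \<in> V \<Longrightarrow> group_hom (G v) GP (iota v)"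
  using grp GP_group iota_hom by (simp add: group_hom_def group_hom_axioms_def)

lemma word_gen:
  assumes Sv: "\<And>v. v \<in> V \<Longrightarrow> Sv v \<subseteq> carrier (G v) \<and> generate (G v) (Sv v) = carrier (G v)"
  shows "w \<in> W \<Longrightarrow> cls w \<in> generate GP (\<Union>v\<in>V. iota v ` Sv v)"
proof (induction w)
  case Nil
  then show ?case by (simp add: one_GP[symmetric] generate.one)
next
  case (Cons a w)
  obtain v g where a: "a = (v,g)" by force
  have v: "v \<in> V" and g: "g \<in> carrier (G v)" and w: "w \<in> W" using Cons a by auto
  have "iota v g \<in> iota v ` generate (G v) (Sv v)" using Sv[OF v] g by simp
  also have "\<dots> = generate GP (iota v ` Sv v)"
    using group_hom.generate_img[OF iota_group_hom[OF v]] Sv[OF v] by simp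
  also have "\<dots> \<subseteq> generate GP (\<Union>v\<in>V. iota v ` Sv v)"
    by (rule group.mono_generate[OF GP_group]) (use v in blast)
  finally have "cls [(v,g)] \<in> generate GP (\<Union>v\<in>V. iota v ` Sv v)" by (simp add: iota_def)
  moreover have "cls (a # w) = cls [(v,g)] \<otimes>\<^bsub>GP\<^esub> cls w"
    using v g w by (simp add: mult_cls a)
  ultimately show ?case using Cons w by (simp add: generate.eng)
qed

lemma finite_index:
  assumes finV: "finite V"
    and Sv: "\<And>v. v \<in> V \<Longrightarrow> finite (Sv v) \<and> Sv v \<subseteq> carrier (G v) \<and> generate (G v) (Sv v) = carrier (G v)"
  shows "finite (rcosets\<^bsub>GP\<^esub> AC)"
proof -
  interpret GPg: group GP by (rule GP_group)
  interpret N: normal AC GP by (rule AC_normal)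
  let ?T = "\<Union>v\<in>V. iota v ` Sv v"
  let ?Q = "GP Mod AC"
  let ?pi = "\<lambda>a. AC #>\<^bsub>GP\<^esub> a"
  have Q: "comm_group ?Q" by (rule N.comm_quot) (rule comm_in)
  have ph: "group_hom GP ?Q ?pi"
    using N.r_coset_hom_Mod N.factorgroup_is_group GP_group by (simp add: group_hom_def group_hom_axioms_def)
  have Tc: "?T \<subseteq> carrier GP" using Sv hom_in_carrier[OF iota_hom] by blast
  have cGP: "carrier GP = generate GP ?T"
  proof
    show "carrier GP \<subseteq> generate GP ?T"
      using word_gen[of Sv] Sv by (auto elim!: carrier_GPE)
    show "generate GP ?T \<subseteq> carrier GP" using GPg.generate_incl[OF Tc] .
  qed
  have "carrier ?Q = ?pi ` carrier GP"
    by (auto simp: FactGroup_def RCOSETS_def)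
  also have "\<dots> = generate ?Q (?pi ` ?T)"
    using group_hom.generate_img[OF ph Tc] cGP by simp
  finally have cQ: "carrier ?Q = generate ?Q (?pi ` ?T)" .
  have "finite (generate ?Q (?pi ` ?T))"
  proof (rule comm_group.finite_gen_invol[OF Q])
    show "finite (?pi ` ?T)" using finV Sv by auto
    show "?pi ` ?T \<subseteq> carrier ?Q" using Tc hom_in_carrier[OF N.r_coset_hom_Mod] by auto
    fix t assume "t \<in> ?pi ` ?T"
    then obtain v s where v: "v \<in> V" and s: "s \<in> Sv v" and t: "t = ?pi (iota v s)" by auto
    have sc: "s \<in> carrier (G v)" using Sv v s by auto
    interpret Gv: group "G v" using grp v .
    have "t \<otimes>\<^bsub>?Q\<^esub> t = ?pi (iota v s \<otimes>\<^bsub>GP\<^esub> iota v s)"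
      using t hom_mult[OF N.r_coset_hom_Mod] hom_in_carrier[OF iota_hom[OF v] sc] by simp
    also have "iota v s \<otimes>\<^bsub>GP\<^esub> iota v s = cls [(v, s \<otimes>\<^bsub>G v\<^esub> s)]"
      using v sc by (simp add: iota_def single_mult)
    also have "?pi (cls [(v, s \<otimes>\<^bsub>G v\<^esub> s)]) = AC"
      using N.rcos_const[OF GP_group square_in_aut_comm[OF v sc]] .
    finally show "t \<otimes>\<^bsub>?Q\<^esub> t = \<one>\<^bsub>?Q\<^esub>" by simp
  qed
  then show ?thesis using cQ by (simp add: FactGroup_def)
qed

lemma all_in_AC:
  assumes odd: "\<And>v. v \<in> V \<Longrightarrow> finite (carrier (G v)) \<and> odd (card (carrier (G v)))"
  shows "AC = carrier GP"
proof -
  interpret H: subgroup AC GP by (rule AC_subgroup)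
  have single: "cls [(v,g)] \<in> AC" if v: "v \<in> V" and g: "g \<in> carrier (G v)" for v g
  proof -
    interpret Gv: comm_group "G v" using ab v .
    obtain k where k: "card (carrier (G v)) = 2 * k + 1" using odd[OF v] oddE by blast
    let ?h = "g [^]\<^bsub>G v\<^esub> (k + 1)"
    have e: "(k+1)+(k+1) = Suc (card (carrier (G v)))" using k by simp
    have "?h \<otimes>\<^bsub>G v\<^esub> ?h = g [^]\<^bsub>G v\<^esub> ((k+1)+(k+1))"
      by (rule Gv.nat_pow_mult[OF g])
    also have "\<dots> = g [^]\<^bsub>G v\<^esub> (Suc (card (carrier (G v))))" by (simp only: e)
    also have "\<dots> = g [^]\<^bsub>G v\<^esub> (card (carrier (G v))) \<otimes>\<^bsub>G v\<^esub> g" by (rule Gv.nat_pow_Suc)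
    also have "\<dots> = g" using Gv.power_order_eq_one odd[OF v] g by simp
    finally have "cls [(v,g)] = cls [(v, ?h \<otimes>\<^bsub>G v\<^esub> ?h)]" by simp
    then show ?thesis using square_in_aut_comm[OF v] g by simp
  qed
  have "w \<in> W \<Longrightarrow> cls w \<in> AC" for w
  proof (induction w)
    case Nil then show ?case using H.one_closed by (simp add: one_GP)
  next
    case (Cons a w)
    obtain v g where a: "a = (v,g)" by force
    have v: "v \<in> V" and g: "g \<in> carrier (G v)" and w: "w \<in> W" using Cons a by auto
    have "cls (a # w) = cls [(v,g)] \<otimes>\<^bsub>GP\<^esub> cls w"
      using v g w by (simp add: mult_cls a)
    then show ?case using H.m_closed single[OF v g] Cons w by simp
  qed
  then have "carrier GP \<subseteq> AC" by (auto elim!: carrier_GPE)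
  then show ?thesis using H.subset by blast
qed

end

theorem proposition8p3:
  fixes V :: "'v set" and E :: "'v set set" and G :: "'v \<Rightarrow> 'g monoid"
  assumes graph: "simple_graph V E"
    and ab: "\<And>v. v \<in> V \<Longrightarrow> comm_group (G v)"
    and fg: "\<And>v. v \<in> V \<Longrightarrow> fin_gen_group (G v)"
    and nontriv: "\<And>v. v \<in> V \<Longrightarrow> carrier (G v) \<noteq> {\<one>\<^bsub>G v\<^esub>}"
    and central_finite: "\<And>v. v \<in> V \<Longrightarrow> st E v = V \<Longrightarrow> finite (carrier (G v))"
  shows "subgroup (aut_comm (graph_product V E G)) (graph_product V E G)
       \<and> finite (rcosets\<^bsub>graph_product V E G\<^esub> (aut_comm (graph_product V E G)))
       \<and> ((\<forall>v\<in>V. st E v \<noteq> V)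
            \<and> (\<forall>v\<in>V. finite (carrier (G v)) \<and> odd (card (carrier (G v))))
          \<longrightarrow> aut_comm (graph_product V E G) = carrier (graph_product V E G))"
  proof -
  interpret gp V E G by (simp add: gp_def ab)
  have finV: "finite V" using graph simple_graph_def by blast
  have "\<forall>v\<in>V. \<exists>S. finite S \<and> S \<subseteq> carrier (G v) \<and> generate (G v) S = carrier (G v)"
    using fg unfolding fin_gen_group_def by blast
  then obtain Sv where Sv: "\<And>v. v \<in> V \<Longrightarrow> finite (Sv v) \<and> Sv v \<subseteq> carrier (G v) \<and> generate (G v) (Sv v) = carrier (G v)"
    by metis
  show ?thesis using AC_subgroup finite_index[OF finV Sv] all_in_AC by blast
qed

end
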